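(* For any Boolean formulas $\alpha$ and $\beta$, $\alpha\vDash_{CQC}\beta$ if and only if $\beta$ is a logical consequence of $\alpha$ in classical sentential logic.
   Context: $\mathcal H^{(n)}=(\mathbb C^2)^{\otimes n}$ with canonical basis $|x_1,\dots,x_n\rangle$ ($x_i\in\{0,1\}$, $|0\rangle=(1,0)$, $|1\rangle=(0,1)$); a canonical register is a canonical basis vector, identified with its projection; $\mathfrak D(\mathcal H^{(n)})$ is the set of density operators. $P_1^{(n)}$ (resp. $P_0^{(n)}$) is the projection onto the span of the basis vectors with $x_n=1$ (resp. $0$); $\mathtt p(\rho)=\mathrm{tr}(P_1^{(n)}\rho)$; $\rho\preceq\sigma$ iff $\mathtt p(\rho)\le\mathtt p(\sigma)$. $Red^{(j)}_{[n_1,\dots,n_t]}(\rho)$ is the reduced state on the $j$-th factor of $\mathcal H^{(n_1)}\otimes\cdots\otimes\mathcal H^{(n_t)}$. Gates (on the canonical basis, extended linearly; $\oplus$ addition mod 2): $\mathtt{NOT}^{(n)}|x_1..x_n\rangle=|x_1..x_{n-1}\rangle\otimes|1-x_n\rangle$; $\mathtt{XOR}^{(m,n)}|x_1..x_m,y_1..y_n\rangle=|x_1..x_m,y_1..y_{n-1}\rangle\otimes|x_m\oplus y_n\rangle$; $\mathtt T^{(m,n,p)}|x_1..x_m,y_1..y_n,z_1..z_p\rangle=|x_1..x_m,y_1..y_n,z_1..z_{p-1}\rangle\otimes|x_my_n\oplus z_p\rangle$; a gate $G$ acts on density operators by $\rho\mapsto G\rho G^\dagger$. Boolean formulas: built from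 atomic formulas (including distinguished atoms $\mathbf t,\mathbf f$) using $\lnot$ (unary), $\uplus$ (binary), $\intercal$ (ternary); abbreviations $\alpha\land\beta:=\intercal(\alpha,\beta,\mathbf f)$, $\alpha\lor\beta:=\lnot(\lnot\alpha\land\lnot\beta)$. $At(\alpha)$ = number of atomic occurrences in $\alpha$. Syntactical tree: $Level_1^\alpha=(\alpha)$; $Level_{i+1}^\alpha$ is obtained from $Level_i^\alpha=(\beta_1,\dots,\beta_r)$ by replacing each non-atomic $\beta_j$ by its arguments (in order) and keeping atomic $\beta_j$; the last level $Level_h^\alpha$ lists all atomic occurrences; $\mathcal H^{(At\alpha)}=\bigotimes_j\mathcal H^{(At\beta_j)}$. The gate $G^\alpha_{(i)}$ ($1\le i<h$) is the tensor product over $j$ of: identity of $\mathbb C^2$ if $\beta_j$ atomic; $\mathtt{NOT}^{(At\beta)}$ if $\beta_j=\lnot\beta$; $\mathtt{XOR}^{(At\beta',At\beta'')}$ if $\beta_j=\beta'\uplus\beta''$; $\mathtt T^{(At\beta',At\beta'',At\beta''')}$ if $\beta_j=\intercal(\beta',\beta'',\beta''')$. A classical quantum computational model is a map $\mathtt{Hol}$, defined on Boolean formulas only, assigning to each level $Level_i^\alpha$ a qumix in $\mathfrak D(\mathcal H^{(At\alpha)})$, such that: the top level $Level_h^\alpha$ receives (the projection of) a canonical register; $\mathtt{Hol}(Level_i^\alpha)=G^\alpha_{(i)}\mathtt{Hol}(Level_{i+1}^\alpha)G^{\alpha\dagger}_{(i)}$; (normality) for each $\gamma$, with the contextual meaning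 of the occurrence $\beta_j$ in $Level_i^\gamma=(\beta_1,\dots,\beta_r)$ defined as $Red^{(j)}_{[At\beta_1,\dots,At\beta_r]}(\mathtt{Hol}(Level_i^\gamma))$, all occurrences of the same subformula $\beta$ in the tree of $\gamma$ have the same contextual meaning $\mathtt{Hol}^\gamma(\beta)$; every occurrence of $\mathbf f$ (resp. $\mathbf t$) has contextual meaning $P_0^{(1)}$ (resp. $P_1^{(1)}$). $\alpha\vDash_{CQC}\beta$ iff for every Boolean formula $\gamma$ having $\alpha$ and $\beta$ as subformulas and every classical quantum computational model $\mathtt{Hol}$, $\mathtt{Hol}^\gamma(\alpha)\preceq\mathtt{Hol}^\gamma(\beta)$. In classical sentential logic, Boolean formulas are interpreted with $\mathbf t$ true, $\mathbf f$ false, $\lnot$ negation, $\uplus$ exclusive disjunction and $\intercal(\alpha,\beta,\delta)$ as $(\alpha\wedge\beta)\oplus\delta$ (exclusive disjunction of the conjunction of $\alpha,\beta$ with $\delta$). *)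

theory Defs
  imports Complex_Main
begin

text \<open>Neg is the unary connective, Xor the binary exclusive
  disjunction, Tof the ternary Toffoli connective.\<close>

datatype bform = Var nat | TT | FF | Neg bform | Xor bform bform | Tof bform bform bform

fun At :: "bform \<Rightarrow> nat" where
  "At (Neg a) = At a"
| "At (Xor a b) = At a + At b"
| "At (Tof a b c) = At a + At b + At c"
| "At _ = 1"

fun expand :: "bform \<Rightarrow> bform list" where
  "expand (Neg a) = [a]"
| "expand (Xor a b) = [a, b]"
| "expand (Tof a b c) = [a, b, c]"
| "expand a = [a]"

fun depth :: "bform \<Rightarrow> nat" where
  "depth (Neg a) = Suc (depth a)"
| "depth (Xor a b) = Suc (max (depth a) (depth b))"
| "depth (Tof a b c) = Suc (max (depth a) (max (depth b) (depth c)))"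
| "depth _ = 0"

text \<open>Levels of the syntactical tree, 0-indexed: level a i is the paper's Level_(i+1);
  the levels are level a 0, ..., level a (depth a), the last one listing all atomic
  occurrences (so the paper's height h is depth a + 1).\<close>
fun level :: "bform \<Rightarrow> nat \<Rightarrow> bform list" where
  "level a 0 = [a]"
| "level a (Suc i) = concat (map expand (level a i))"

fun subformulas :: "bform \<Rightarrow> bform set" where
  "subformulas (Neg a) = insert (Neg a) (subformulas a)"
| "subformulas (Xor a b) = insert (Xor a b) (subformulas a \<union> subformulas b)"
| "subformulas (Tof a b c) = insert (Tof a b c) (subformulas a \<union> subformulas b \<union> subformulas c)"
| "subformulas a = {a}"

text \<open>An operator on H^(n) is represented by its matrix w.r.t. the canonical basis,
  indexed by bit strings (bool lists of length n; True = 1). Tensor products of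
  basis vectors correspond to list concatenation.\<close>

type_synonym qop = "bool list \<Rightarrow> bool list \<Rightarrow> complex"

definition Bits :: "nat \<Rightarrow> bool list set" where
  "Bits n = {xs. length xs = n}"

definition density :: "nat \<Rightarrow> qop \<Rightarrow> bool" where
  "density n \<rho> \<longleftrightarrow>
     (\<forall>x y. (x \<notin> Bits n \<or> y \<notin> Bits n) \<longrightarrow> \<rho> x y = 0)
   \<and> (\<forall>x y. \<rho> y x = cnj (\<rho> x y))
   \<and> (\<forall>v :: bool list \<Rightarrow> complex.
        0 \<le> Re (\<Sum>x\<in>Bits n. \<Sum>y\<in>Bits n. cnj (v x) * \<rho> x y * v y))
   \<and> (\<Sum>x\<in>Bits n. \<rho> x x) = 1"

definition proj_reg :: "bool list \<Rightarrow> qop" where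
  "proj_reg r = (\<lambda>x y. if x = r \<and> y = r then 1 else 0)"

definition canonical_register :: "nat \<Rightarrow> qop \<Rightarrow> bool" where
  "canonical_register n \<rho> \<longleftrightarrow> (\<exists>r\<in>Bits n. \<rho> = proj_reg r)"

definition P0_1 :: qop where "P0_1 = proj_reg [False]"
definition P1_1 :: qop where "P1_1 = proj_reg [True]"

text \<open>p(rho) = tr(P_1^(n) rho) (real for density operators).\<close>
definition prob :: "nat \<Rightarrow> qop \<Rightarrow> real" where
  "prob n \<rho> = Re (\<Sum>x\<in>{x\<in>Bits n. last x}. \<rho> x x)"

definition preceq :: "nat \<Rightarrow> nat \<Rightarrow> qop \<Rightarrow> qop \<Rightarrow> bool" where
  "preceq n m \<rho> \<sigma> \<longleftrightarrow> prob n \<rho> \<le> prob m \<sigma>"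

text \<open>Reduced state on the j-th factor (0-indexed) of H^(n_1) (x) ... (x) H^(n_t),
  i.e. the partial trace over all the other factors.\<close>
definition Red :: "nat list \<Rightarrow> nat \<Rightarrow> qop \<Rightarrow> qop" where
  "Red ns j \<rho> = (\<lambda>x y. \<Sum>p\<in>Bits (sum_list (take j ns)). \<Sum>q\<in>Bits (sum_list (drop (Suc j) ns)).
                        \<rho> (p @ x @ q) (p @ y @ q))"

text \<open>Basis maps of the gates (NOT^(n), XOR^(m,n), T^(m,n,p)).\<close>
definition NOTg :: "bool list \<Rightarrow> bool list" where
  "NOTg xs = butlast xs @ [\<not> last xs]"

definition XORg :: "nat \<Rightarrow> bool list \<Rightarrow> bool list" where
  "XORg m xs = butlast xs @ [xs ! (m - 1) \<noteq> last xs]"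

definition TOFg :: "nat \<Rightarrow> nat \<Rightarrow> bool list \<Rightarrow> bool list" where
  "TOFg m n xs = butlast xs @ [(xs ! (m - 1) \<and> xs ! (m + n - 1)) \<noteq> last xs]"

fun gate_of :: "bform \<Rightarrow> bool list \<Rightarrow> bool list" where
  "gate_of (Neg a) = NOTg"
| "gate_of (Xor a b) = XORg (At a)"
| "gate_of (Tof a b c) = TOFg (At a) (At b)"
| "gate_of _ = id"

text \<open>Basis map of G_(i): tensor product of the gates of the formulas of a level.\<close>
fun level_gate :: "bform list \<Rightarrow> bool list \<Rightarrow> bool list" where
  "level_gate [] xs = []"
| "level_gate (b # bs) xs = gate_of b (take (At b) xs) @ level_gate bs (drop (At b) xs)"

definition gate_matrix :: "(bool list \<Rightarrow> bool list) \<Rightarrow> qop" where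
  "gate_matrix g = (\<lambda>x y. if x = g y then 1 else 0)"

definition apply_gate :: "nat \<Rightarrow> (bool list \<Rightarrow> bool list) \<Rightarrow> qop \<Rightarrow> qop" where
  "apply_gate n g \<rho> = (\<lambda>x y. \<Sum>u\<in>Bits n. \<Sum>v\<in>Bits n.
       gate_matrix g x u * \<rho> u v * cnj (gate_matrix g y v))"

text \<open>Hol g i is the qumix assigned to level i (0-indexed) of the tree of g.\<close>
type_synonym holmap = "bform \<Rightarrow> nat \<Rightarrow> qop"

definition occurs :: "bform \<Rightarrow> bform \<Rightarrow> nat \<Rightarrow> nat \<Rightarrow> bool" where
  "occurs g b i j \<longleftrightarrow> i \<le> depth g \<and> j < length (level g i) \<and> level g i ! j = b"

definition ctx_meaning :: "holmap \<Rightarrow> bform \<Rightarrow> nat \<Rightarrow> nat \<Rightarrow> qop" where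
  "ctx_meaning Hol g i j = Red (map At (level g i)) j (Hol g i)"

definition cqc_model :: "holmap \<Rightarrow> bool" where
  "cqc_model Hol \<longleftrightarrow> (\<forall>g.
      (\<forall>i\<le>depth g. density (At g) (Hol g i))
    \<and> canonical_register (At g) (Hol g (depth g))
    \<and> (\<forall>i<depth g. Hol g i = apply_gate (At g) (level_gate (level g i)) (Hol g (Suc i)))
    \<and> (\<forall>b i j i' j'. occurs g b i j \<and> occurs g b i' j' \<longrightarrow>
          ctx_meaning Hol g i j = ctx_meaning Hol g i' j')
    \<and> (\<forall>i j. occurs g FF i j \<longrightarrow> ctx_meaning Hol g i j = P0_1)
    \<and> (\<forall>i j. occurs g TT i j \<longrightarrow> ctx_meaning Hol g i j = P1_1))"

text \<open>Contextual meaning Hol^g(b) of a subformula b of g (well defined by normality).\<close>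
definition hol_meaning :: "holmap \<Rightarrow> bform \<Rightarrow> bform \<Rightarrow> qop" where
  "hol_meaning Hol g b = (SOME \<rho>. \<exists>i j. occurs g b i j \<and> \<rho> = ctx_meaning Hol g i j)"

definition cqc_entails :: "bform \<Rightarrow> bform \<Rightarrow> bool" where
  "cqc_entails a b \<longleftrightarrow> (\<forall>g Hol. a \<in> subformulas g \<and> b \<in> subformulas g \<and> cqc_model Hol \<longrightarrow>
      preceq (At a) (At b) (hol_meaning Hol g a) (hol_meaning Hol g b))"

fun eval :: "(nat \<Rightarrow> bool) \<Rightarrow> bform \<Rightarrow> bool" where
  "eval v (Var k) = v k"
| "eval v TT = True"
| "eval v FF = False"
| "eval v (Neg a) = (\<not> eval v a)"
| "eval v (Xor a b) = (eval v a \<noteq> eval v b)"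
| "eval v (Tof a b c) = ((eval v a \<and> eval v b) \<noteq> eval v c)"

definition classical_consequence :: "bform \<Rightarrow> bform \<Rightarrow> bool" where
  "classical_consequence a b \<longleftrightarrow> (\<forall>v. eval v a \<longrightarrow> eval v b)"

end

theory Submission
  imports Defs
begin

lemma At_pos: "At b \<ge> 1"
  by (induction b) auto

lemma At_gt0[simp]: "0 < At b"
  using At_pos[of b] by simp

fun fv :: "(nat \<Rightarrow> bool) \<Rightarrow> bform \<Rightarrow> bool list" where
  "fv v (Var k) = [v k]"
| "fv v TT = [True]"
| "fv v FF = [False]"
| "fv v (Neg a) = NOTg (fv v a)"
| "fv v (Xor a b) = XORg (At a) (fv v a @ fv v b)"
| "fv v (Tof a b c) = TOFg (At a) (At b) (fv v a @ fv v b @ fv v c)"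

lemma length_fv: "length (fv v b) = At b"
  by (induction b) (auto simp: NOTg_def XORg_def TOFg_def)

lemma fv_ne: "fv v b \<noteq> []"
  using length_fv[of v b] At_pos[of b] by auto

lemma last_fv: "last (fv v b) = eval v b"
proof (induction b)
  case (Xor a b)
  have "(fv v a @ fv v b) ! (At a - 1) = last (fv v a)"
    using length_fv[of v a] At_pos[of a] fv_ne[of v a]
    by (simp add: nth_append last_conv_nth)
  then show ?case using Xor fv_ne[of v b] by (simp add: XORg_def)
next
  case (Tof a b c)
  have 1: "(fv v a @ fv v b @ fv v c) ! (At a - 1) = last (fv v a)"
    using length_fv[of v a] At_pos[of a] fv_ne[of v a]
    by (simp add: nth_append last_conv_nth)
  have 2: "(fv v a @ fv v b @ fv v c) ! (At a + At b - 1) = last (fv v b)"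
  proof -
    have "(fv v a @ fv v b @ fv v c) ! (At a + At b - 1) = (fv v b @ fv v c) ! (At b - 1)"
    proof -
      have "At a + At b - 1 = length (fv v a) + (At b - 1)"
        using length_fv[of v a] At_pos[of b] by simp
      then show ?thesis by (simp only: nth_append_length_plus append_assoc)
    qed
    also have "\<dots> = last (fv v b)"
      using length_fv[of v b] At_pos[of b] fv_ne[of v b] by (simp add: nth_append last_conv_nth)
    finally show ?thesis .
  qed
  show ?case using Tof 1 2 fv_ne[of v c] by (simp add: TOFg_def)
qed (auto simp: NOTg_def)

lemma sum_At_expand: "sum_list (map At (expand b)) = At b"
  by (cases b) auto

lemma fv_gate: "fv v b = gate_of b (concat (map (fv v) (expand b)))"
  by (cases b) auto

lemma level_gate_concat:
  assumes "\<forall>b\<in>set L. length (h b) = At b"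
  shows "level_gate L (concat (map h L)) = concat (map (\<lambda>b. gate_of b (h b)) L)"
  using assms by (induction L) auto

lemma length_concat_expand: "length (concat (map (fv v) (expand b))) = At b"
  by (cases b) (auto simp: length_fv)

lemma level_gate_fv:
  "level_gate L (concat (map (fv v) (concat (map expand L)))) = concat (map (fv v) L)"
proof -
  have "concat (map (fv v) (concat (map expand L))) = concat (map (\<lambda>b. concat (map (fv v) (expand b))) L)"
    by (induction L) auto
  then show ?thesis
    by (simp add: level_gate_concat length_concat_expand fv_gate[symmetric])
qed

lemma level_Suc: "level g (Suc i) = concat (map (\<lambda>c. level c i) (expand g))"
proof (induction i)
  case 0
  then show ?case by (induction "expand g") auto
next
  case (Suc i)
  have "level g (Suc (Suc i)) = concat (map expand (concat (map (\<lambda>c. level c i) (expand g))))"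
    using Suc by simp
  also have "\<dots> = concat (map (\<lambda>c. level c (Suc i)) (expand g))"
  proof -
    have "\<And>xs. concat (map expand (concat (map (\<lambda>c. level c i) xs))) = concat (map (\<lambda>c. level c (Suc i)) xs)"
      subgoal for xs by (induction xs) auto done
    then show ?thesis .
  qed
  finally show ?case .
qed

lemma sum_At_concat_expand: "sum_list (map At (concat (map expand L))) = sum_list (map At L)"
  by (induction L) (auto simp: sum_At_expand)

lemma sum_At_level: "sum_list (map At (level g i)) = At g"
  by (induction i) (auto simp: sum_At_concat_expand)

lemma expand_depth: "b \<in> set (expand c) \<Longrightarrow> (b = c \<and> depth c = 0) \<or> depth b < depth c"
  by (cases c) auto

lemma depth_level: "i \<le> depth g \<Longrightarrow> b \<in> set (level g i) \<Longrightarrow> depth b + i \<le> depth g"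
proof (induction i arbitrary: b)
  case 0 then show ?case by simp
next
  case (Suc i)
  then obtain c where c: "c \<in> set (level g i)" "b \<in> set (expand c)" by auto
  with Suc have "depth c + i \<le> depth g" by simp
  with expand_depth[OF c(2)] Suc.prems show ?case by auto
qed

lemma self_sub: "g \<in> subformulas g"
  by (cases g) auto

lemma subformula_level: "b \<in> subformulas g \<Longrightarrow> \<exists>i\<le>depth g. b \<in> set (level g i)"
proof (induction g)
  case (Neg a)
  show ?case
  proof (cases "b = Neg a")
    case True then show ?thesis by (intro exI[of _ 0]) auto
  next
    case False
    then obtain i where "i \<le> depth a" "b \<in> set (level a i)" using Neg by auto
    then show ?thesis by (intro exI[of _ "Suc i"]) (simp add: level_Suc del: level.simps)
  qed
next
  case (Xor a c)
  show ?case
  proof (cases "b = Xor a c")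
    case True then show ?thesis by (intro exI[of _ 0]) auto
  next
    case False
    then obtain d i where "d \<in> {a, c}" "i \<le> depth d" "b \<in> set (level d i)" using Xor by auto
    then show ?thesis by (intro exI[of _ "Suc i"]) (auto simp add: level_Suc simp del: level.simps)
  qed
next
  case (Tof a c e)
  show ?case
  proof (cases "b = Tof a c e")
    case True then show ?thesis by (intro exI[of _ 0]) auto
  next
    case False
    then obtain d i where "d \<in> {a, c, e}" "i \<le> depth d" "b \<in> set (level d i)" using Tof by auto
    then show ?thesis by (intro exI[of _ "Suc i"]) (auto simp add: level_Suc simp del: level.simps)
  qed
qed auto

lemma subformula_occurs: "b \<in> subformulas g \<Longrightarrow> \<exists>i j. occurs g b i j"
proof -
  assume "b \<in> subformulas g"
  then obtain i where "i \<le> depth g" "b \<in> set (level g i)" using subformula_level by blast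
  then show ?thesis unfolding occurs_def by (metis in_set_conv_nth)
qed

lemma finite_Bits[simp]: "finite (Bits n)"
proof -
  have "Bits n = {xs. set xs \<subseteq> (UNIV::bool set) \<and> length xs = n}" by (auto simp: Bits_def)
  then show ?thesis using finite_lists_length_eq[of "UNIV::bool set" n] by simp
qed

lemma double_delta2: "finite A \<Longrightarrow> r \<in> A \<Longrightarrow> finite B \<Longrightarrow> s \<in> B \<Longrightarrow>
   (\<Sum>u\<in>A. \<Sum>w\<in>B. if u = r \<and> w = s then h u w else 0) = (h r s :: complex)"
proof -
  assume "finite A" "r \<in> A" "finite B" "s \<in> B"
  have "\<And>u. (\<Sum>w\<in>B. if u = r \<and> w = s then h u w else 0) = (if u = r then h u s else 0)"
    using \<open>finite B\<close> \<open>s \<in> B\<close> by (case_tac "u = r") (simp_all add: sum.delta')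
  then show ?thesis using \<open>finite A\<close> \<open>r \<in> A\<close> by (simp add: sum.delta')
qed

lemma double_delta: "finite A \<Longrightarrow> r \<in> A \<Longrightarrow> (\<Sum>u\<in>A. \<Sum>w\<in>A. if u = r \<and> w = r then h u w else 0) = (h r r :: complex)"
  by (rule double_delta2)

lemma proj_reg_inj: "proj_reg r = proj_reg s \<Longrightarrow> r = s"
proof -
  assume h: "proj_reg r = proj_reg s"
  have "proj_reg r r r = proj_reg s r r" using h by simp
  then show "r = s" by (simp add: proj_reg_def split: if_splits)
qed

lemma apply_gate_proj:
  assumes "r \<in> Bits n"
  shows "apply_gate n g (proj_reg r) = proj_reg (g r)"
proof (intro ext)
  fix x y
  have "apply_gate n g (proj_reg r) x y = (\<Sum>u\<in>Bits n. \<Sum>w\<in>Bits n. if u = r \<and> w = r then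
        gate_matrix g x u * cnj (gate_matrix g y w) else 0)"
    unfolding apply_gate_def proj_reg_def by (intro sum.cong refl) simp
  also have "\<dots> = gate_matrix g x r * cnj (gate_matrix g y r)"
    using assms by (simp only: double_delta finite_Bits)
  also have "\<dots> = proj_reg (g r) x y"
    unfolding gate_matrix_def proj_reg_def by simp
  finally show "apply_gate n g (proj_reg r) x y = proj_reg (g r) x y" .
qed

lemma density_proj:
  assumes "r \<in> Bits n"
  shows "density n (proj_reg r)"
proof -
  have "\<And>v. (\<Sum>x\<in>Bits n. \<Sum>y\<in>Bits n. cnj (v x) * proj_reg r x y * v y) = cnj (v r) * v r"
  proof -
    fix v :: "bool list \<Rightarrow> complex"
    have "(\<Sum>x\<in>Bits n. \<Sum>y\<in>Bits n. cnj (v x) * proj_reg r x y * v y)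
        = (\<Sum>x\<in>Bits n. \<Sum>y\<in>Bits n. if x = r \<and> y = r then cnj (v x) * v y else 0)"
      unfolding proj_reg_def by (intro sum.cong refl) simp
    also have "\<dots> = cnj (v r) * v r" using assms by (simp only: double_delta finite_Bits)
    finally show "?thesis v" .
  qed
  moreover have "\<And>z::complex. 0 \<le> Re (cnj z * z)" by simp
  moreover have "(\<Sum>x\<in>Bits n. proj_reg r x x) = 1"
    using assms by (simp add: proj_reg_def)
  ultimately show ?thesis
    using assms unfolding density_def by (auto simp: proj_reg_def)
qed

lemma prob_proj:
  assumes "r \<in> Bits n"
  shows "prob n (proj_reg r) = (if last r then 1 else 0)"
proof -
  have "(\<Sum>x\<in>{x\<in>Bits n. last x}. proj_reg r x x) = (\<Sum>x\<in>{x\<in>Bits n. last x}. if x = r then 1 else 0)"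
    by (intro sum.cong refl) (simp add: proj_reg_def)
  also have "\<dots> = (if last r then 1 else 0)"
    using assms by (simp add: sum.delta')
  finally show ?thesis unfolding prob_def by simp
qed

definition chunk :: "nat list \<Rightarrow> nat \<Rightarrow> bool list \<Rightarrow> bool list" where
  "chunk ns j r = take (ns ! j) (drop (sum_list (take j ns)) r)"

lemma split_eq:
  assumes "length r = s + m + t" "length p = s" "length q = t"
  shows "(p @ x @ q = r) = (p = take s r \<and> q = drop (s + m) r \<and> x = take m (drop s r))"
proof
  assume h: "p @ x @ q = r"
  then have lx: "length x = m" using assms by auto
  show "p = take s r \<and> q = drop (s + m) r \<and> x = take m (drop s r)"
  proof -
    have d: "drop s r = x @ q" using h assms(2) by auto
    have "take s r = p" using h assms(2) by auto
    moreover have "take m (drop s r) = x" using d lx by simp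
    moreover have "drop (s + m) r = q" using d lx by (simp add: add.commute flip: drop_drop)
    ultimately show ?thesis by simp
  qed
next
  assume h: "p = take s r \<and> q = drop (s + m) r \<and> x = take m (drop s r)"
  have "r = take s r @ drop s r" by simp
  also have "drop s r = take m (drop s r) @ drop m (drop s r)" by (rule append_take_drop_id[symmetric])
  finally show "p @ x @ q = r" using h by (simp add: add.commute)
qed

lemma Red_proj:
  assumes "length r = sum_list ns" "j < length ns"
  shows "Red ns j (proj_reg r) = proj_reg (chunk ns j r)"
proof (intro ext)
  fix x y
  define s where "s = sum_list (take j ns)"
  define t where "t = sum_list (drop (Suc j) ns)"
  define m where "m = ns ! j"
  have "ns = take j ns @ ns ! j # drop (Suc j) ns" using assms(2) by (rule id_take_nth_drop)
  then have "sum_list ns = sum_list (take j ns @ ns ! j # drop (Suc j) ns)" by simp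
  then have lr: "length r = s + m + t" using assms(1) unfolding s_def t_def m_def by simp
  have "Red ns j (proj_reg r) x y = (\<Sum>p\<in>Bits s. \<Sum>q\<in>Bits t.
      if p = take s r \<and> q = drop (s + m) r then (if x = take m (drop s r) \<and> y = take m (drop s r) then 1 else 0) else 0)"
    unfolding Red_def s_def[symmetric] t_def[symmetric]
  proof (intro sum.cong refl)
    fix p q assume pq: "p \<in> Bits s" "q \<in> Bits t"
    have ex: "(p @ x @ q = r) = (p = take s r \<and> q = drop (s + m) r \<and> x = take m (drop s r))"
      using split_eq[OF lr] pq by (simp add: Bits_def)
    have ey: "(p @ y @ q = r) = (p = take s r \<and> q = drop (s + m) r \<and> y = take m (drop s r))"
      using split_eq[OF lr] pq by (simp add: Bits_def)
    show "proj_reg r (p @ x @ q) (p @ y @ q) = (if p = take s r \<and> q = drop (s + m) r then (if x = take m (drop s r) \<and> y = take m (drop s r) then 1 else 0) else 0)"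
      unfolding proj_reg_def ex ey by auto
  qed
  also have "\<dots> = (if x = take m (drop s r) \<and> y = take m (drop s r) then 1 else 0)"
    apply (rule double_delta2) 
    apply (simp)
    using lr apply (simp add: Bits_def)
    apply (simp)
    using lr apply (simp add: Bits_def)
    done
  also have "\<dots> = proj_reg (chunk ns j r) x y"
    unfolding proj_reg_def chunk_def s_def m_def by simp
  finally show "Red ns j (proj_reg r) x y = proj_reg (chunk ns j r) x y" .
qed

lemma chunk_Cons0: "chunk (n # ns) 0 r = take n r"
  by (simp add: chunk_def)

lemma chunk_ConsS: "chunk (n # ns) (Suc j) r = chunk ns j (drop n r)"
  by (simp add: chunk_def add.commute)

lemma chunk_concat:
  assumes "\<forall>b\<in>set L. length (h b) = At b" "j < length L"
  shows "chunk (map At L) j (concat (map h L)) = h (L ! j)"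
  using assms
proof (induction L arbitrary: j)
  case (Cons b L)
  then show ?case by (cases j) (auto simp: chunk_Cons0 chunk_ConsS)
qed simp

lemma concat_from_chunks:
  assumes "length r = sum_list (map At L)" "\<forall>j<length L. chunk (map At L) j r = h (L ! j)"
  shows "r = concat (map h L)"
  using assms
proof (induction L arbitrary: r)
  case Nil then show ?case by simp
next
  case (Cons b L)
  have 1: "take (At b) r = h b" using Cons.prems(2)[rule_format, of 0] by (simp add: chunk_Cons0)
  have 2: "drop (At b) r = concat (map h L)"
  proof (rule Cons.IH)
    show "length (drop (At b) r) = sum_list (map At L)" using Cons.prems(1) by simp
    show "\<forall>j<length L. chunk (map At L) j (drop (At b) r) = h (L ! j)"
      using Cons.prems(2) by (auto simp: chunk_ConsS[symmetric])
  qed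
  have "r = take (At b) r @ drop (At b) r" by simp
  then show ?case using 1 2 by simp
qed

lemma chunk_length:
  assumes "length r = sum_list ns" "j < length ns"
  shows "length (chunk ns j r) = ns ! j"
proof -
  have "ns = take j ns @ ns ! j # drop (Suc j) ns" using assms(2) by (rule id_take_nth_drop)
  then have "sum_list ns = sum_list (take j ns @ ns ! j # drop (Suc j) ns)" by simp
  then have "length r = sum_list (take j ns) + ns ! j + sum_list (drop (Suc j) ns)" using assms(1) by simp
  then show ?thesis unfolding chunk_def by simp
qed

lemma length_concat_fv: "length (concat (map (fv v) L)) = sum_list (map At L)"
  by (induction L) (auto simp: length_fv)

lemma Bits_level: "concat (map (fv v) (level g i)) \<in> Bits (At g)"
  by (simp add: Bits_def length_concat_fv sum_At_level)

lemma ctx_of_proj: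
  assumes "Hol g i = proj_reg (concat (map (fv v) (level g i)))" "j < length (level g i)"
  shows "ctx_meaning Hol g i j = proj_reg (fv v (level g i ! j))"
proof -
  have "ctx_meaning Hol g i j = proj_reg (chunk (map At (level g i)) j (concat (map (fv v) (level g i))))"
    unfolding ctx_meaning_def assms(1)
    by (rule Red_proj) (use assms(2) in \<open>simp_all add: length_concat_fv\<close>)
  also have "chunk (map At (level g i)) j (concat (map (fv v) (level g i))) = fv v (level g i ! j)"
    by (rule chunk_concat) (use assms(2) in \<open>simp_all add: length_fv\<close>)
  finally show ?thesis .
qed

definition Hv :: "(nat \<Rightarrow> bool) \<Rightarrow> holmap" where
  "Hv v g i = proj_reg (concat (map (fv v) (level g i)))"

lemma ctx_Hv: "j < length (level g i) \<Longrightarrow> ctx_meaning (Hv v) g i j = proj_reg (fv v (level g i ! j))"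
  by (rule ctx_of_proj) (simp_all add: Hv_def)

lemma model_Hv: "cqc_model (Hv v)"
  unfolding cqc_model_def
proof (rule allI, intro conjI)
  fix g
  show "\<forall>i\<le>depth g. density (At g) (Hv v g i)"
    by (simp add: Hv_def density_proj Bits_level)
  show "canonical_register (At g) (Hv v g (depth g))"
    unfolding canonical_register_def Hv_def using Bits_level by blast
  show "\<forall>i<depth g. Hv v g i = apply_gate (At g) (level_gate (level g i)) (Hv v g (Suc i))"
    by (simp add: Hv_def apply_gate_proj Bits_level level_gate_fv del: level.simps)
       (simp add: level_gate_fv)
  show "\<forall>b i j i' j'. occurs g b i j \<and> occurs g b i' j' \<longrightarrow> ctx_meaning (Hv v) g i j = ctx_meaning (Hv v) g i' j'"
    by (auto simp: occurs_def ctx_Hv)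
  show "\<forall>i j. occurs g FF i j \<longrightarrow> ctx_meaning (Hv v) g i j = P0_1"
    by (auto simp: occurs_def ctx_Hv P0_1_def)
  show "\<forall>i j. occurs g TT i j \<longrightarrow> ctx_meaning (Hv v) g i j = P1_1"
    by (auto simp: occurs_def ctx_Hv P1_1_def)
qed

lemma hol_meaning_eq:
  assumes "cqc_model Hol" "occurs g b i j"
  shows "hol_meaning Hol g b = ctx_meaning Hol g i j"
proof -
  have ex: "\<exists>\<rho>. \<exists>i j. occurs g b i j \<and> \<rho> = ctx_meaning Hol g i j" using assms(2) by blast
  have "\<exists>i j. occurs g b i j \<and> hol_meaning Hol g b = ctx_meaning Hol g i j"
    unfolding hol_meaning_def by (rule someI_ex[OF ex])
  then obtain i' j' where "occurs g b i' j'" "hol_meaning Hol g b = ctx_meaning Hol g i' j'"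
    by blast
  then show ?thesis using assms unfolding cqc_model_def by metis
qed

lemma prob_fv: "prob (At a) (proj_reg (fv v a)) = (if eval v a then 1 else 0)"
  by (simp add: prob_proj Bits_def length_fv last_fv)

lemma levels_of_model:
  fixes Hol :: holmap and g :: bform and v :: "nat \<Rightarrow> bool"
  assumes M: "cqc_model Hol"
  and v_def: "v = (\<lambda>k. hol_meaning Hol g (Var k) [True] [True] = 1)"
  shows "i \<le> depth g \<Longrightarrow> Hol g i = proj_reg (concat (map (fv v) (level g i)))"
proof (induction rule: inc_induct)
  case base
  have Mg: "canonical_register (At g) (Hol g (depth g))"
    "\<forall>i j. occurs g FF i j \<longrightarrow> ctx_meaning Hol g i j = P0_1"
    "\<forall>i j. occurs g TT i j \<longrightarrow> ctx_meaning Hol g i j = P1_1"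
    using M unfolding cqc_model_def by blast+
  obtain r where r: "r \<in> Bits (At g)" "Hol g (depth g) = proj_reg r"
    using Mg(1) unfolding canonical_register_def by blast
  define L where "L = level g (depth g)"
  have lr: "length r = sum_list (map At L)" using r(1) by (simp add: Bits_def L_def sum_At_level)
  have "r = concat (map (fv v) L)"
  proof (rule concat_from_chunks[OF lr], intro allI impI)
    fix j assume j: "j < length L"
    define b where "b = L ! j"
    have occ: "occurs g b (depth g) j" using j unfolding occurs_def L_def b_def by simp
    have ctx: "ctx_meaning Hol g (depth g) j = proj_reg (chunk (map At L) j r)"
      unfolding ctx_meaning_def r(2) L_def[symmetric] by (rule Red_proj) (use lr j in simp_all)
    have len: "length (chunk (map At L) j r) = At b"
      using chunk_length[of r "map At L" j] lr j by (simp add: b_def)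
    have "b \<in> set L" using j b_def by simp
    then have d0: "depth b = 0" using depth_level[of "depth g" g b] unfolding L_def by simp
    show "chunk (map At L) j r = fv v b"
    proof (cases b)
      case (Var k)
      then obtain c where c: "chunk (map At L) j r = [c]" using len by (cases "chunk (map At L) j r") auto
      have "hol_meaning Hol g (Var k) = proj_reg [c]"
        using hol_meaning_eq[OF M occ] ctx c Var by simp
      then have "v k = c" unfolding v_def proj_reg_def by simp
      then show ?thesis using c Var by simp
    next
      case TT
      then have "proj_reg (chunk (map At L) j r) = proj_reg [True]"
        using Mg(3) occ ctx by (simp add: P1_1_def)
      then show ?thesis using TT proj_reg_inj by simp
    next
      case FF
      then have "proj_reg (chunk (map At L) j r) = proj_reg [False]"
        using Mg(2) occ ctx by (simp add: P0_1_def)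
      then show ?thesis using FF proj_reg_inj by simp
    qed (use d0 in auto)
  qed
  then show ?case using r(2) L_def by simp
next
  case (step n)
  have "Hol g n = apply_gate (At g) (level_gate (level g n)) (Hol g (Suc n))"
    using M step.hyps(2) unfolding cqc_model_def by blast
  also have "\<dots> = proj_reg (level_gate (level g n) (concat (map (fv v) (level g (Suc n)))))"
    using step.IH by (simp add: apply_gate_proj Bits_level del: level.simps)
  also have "\<dots> = proj_reg (concat (map (fv v) (level g n)))"
    by (simp add: level_gate_fv)
  finally show ?case .
qed

theorem lemma4p19:
  fixes a b :: bform
  shows "cqc_entails a b \<longleftrightarrow> classical_consequence a b"
proof
  assume E: "cqc_entails a b"
  show "classical_consequence a b"
    unfolding classical_consequence_def
  proof (intro allI impI, rule ccontr)
    fix v assume ea: "eval v a" and neb: "\<not> eval v b"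
    define g where "g = Xor a b"
    have sa: "a \<in> subformulas g" and sb: "b \<in> subformulas g"
      unfolding g_def using self_sub[of a] self_sub[of b] by auto
    have hm: "hol_meaning (Hv v) g c = proj_reg (fv v c)" if sc: "c \<in> subformulas g" for c
    proof -
      obtain i j where o: "occurs g c i j" using subformula_occurs[OF sc] by blast
      show ?thesis using hol_meaning_eq[OF model_Hv o] ctx_Hv o unfolding occurs_def by auto
    qed
    have "preceq (At a) (At b) (hol_meaning (Hv v) g a) (hol_meaning (Hv v) g b)"
      using E sa sb model_Hv unfolding cqc_entails_def by blast
    then show False using hm[OF sa] hm[OF sb] ea neb by (simp add: preceq_def prob_fv)
  qed
next
  assume C: "classical_consequence a b"
  show "cqc_entails a b"
    unfolding cqc_entails_def
  proof (intro allI impI)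
    fix g Hol assume H: "a \<in> subformulas g \<and> b \<in> subformulas g \<and> cqc_model Hol"
    define v where "v = (\<lambda>k. hol_meaning Hol g (Var k) [True] [True] = 1)"
    have lev: "\<And>i. i \<le> depth g \<Longrightarrow> Hol g i = proj_reg (concat (map (fv v) (level g i)))"
      using levels_of_model[where Hol=Hol and g=g and v=v] H v_def by blast
    have hm: "hol_meaning Hol g c = proj_reg (fv v c)" if sc: "c \<in> subformulas g" for c
    proof -
      obtain i j where o: "occurs g c i j" using subformula_occurs[OF sc] by blast
      then have "i \<le> depth g" "j < length (level g i)" "level g i ! j = c" unfolding occurs_def by auto
      then have "ctx_meaning Hol g i j = proj_reg (fv v c)"
        using ctx_of_proj[where Hol=Hol and g=g and i=i and v=v and j=j] lev by auto
      then show ?thesis using hol_meaning_eq[of Hol g c i j] H o by auto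
    qed
    show "preceq (At a) (At b) (hol_meaning Hol g a) (hol_meaning Hol g b)"
      using hm H C by (simp add: preceq_def prob_fv classical_consequence_def)
  qed
qed

end
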